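(* Let $\Omega \subset \mathbb{R}^N$ be open and bounded, $\alpha \in (0,N)$, and $\beta \in (0,N]$. There exist constants $c,C>0$, depending only on $\alpha$, $N$, $\beta$ and $\Omega$, such that \[ \mathcal{H}^{\beta}_{\infty}(\{x\in \Omega:|I_{\alpha}f(x)|>t\})\leq Ce^{-ct^{\frac{N}{N-\alpha}}}\qquad\text{for all } t>0 \] and for all $f \in L^{N/\alpha}(\Omega)$ with $\|f\|_{L^{N/\alpha}(\Omega)}\leq 1$.
   Context: For $\alpha\in(0,N)$ the Riesz potential is $I_\alpha f(x) = \frac{1}{\gamma(\alpha)}\int_{\mathbb{R}^N} \frac{f(y)}{|x-y|^{N-\alpha}}\,dy$ with $\gamma(\alpha)=\pi^{N/2}2^{\alpha}\Gamma(\alpha/2)\Gamma((N-\alpha)/2)^{-1}$; a function defined on $\Omega$ is extended by zero outside $\Omega$. For $E\subset\mathbb{R}^N$ and $\beta>0$ the Hausdorff content is $\mathcal{H}_{\infty}^{\beta}(E):=\inf\{\sum_{i=1}^\infty \omega_{\beta} r_i^{\beta}:E\subset \bigcup_{i=1}^\infty B(x_i,r_i)\}$, the infimum over all countable coverings by balls of arbitrary radii, where $\omega_{\beta} = \pi^{\beta/2}/\Gamma(\frac{\beta}{2}+1)$. *)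

theory Defs
  imports "HOL-Analysis.Analysis"
begin

definition riesz_gamma :: "nat \<Rightarrow> real \<Rightarrow> real" where
  "riesz_gamma N \<alpha> = pi powr (real N / 2) * 2 powr \<alpha> * Gamma (\<alpha> / 2) / Gamma ((real N - \<alpha>) / 2)"

text \<open>Kernel integrand of I_alpha f at x (f extended by zero outside Omega; integral over Omega).\<close>
definition riesz_kernel :: "real \<Rightarrow> ('a::euclidean_space \<Rightarrow> real) \<Rightarrow> 'a \<Rightarrow> 'a \<Rightarrow> real" where
  "riesz_kernel \<alpha> f x y = f y / norm (x - y) powr (real DIM('a) - \<alpha>)"

definition riesz_potential :: "real \<Rightarrow> 'a::euclidean_space set \<Rightarrow> ('a \<Rightarrow> real) \<Rightarrow> 'a \<Rightarrow> real" where
  "riesz_potential \<alpha> \<Omega> f x =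
     (1 / riesz_gamma DIM('a) \<alpha>) * (LINT y:\<Omega>|lebesgue. riesz_kernel \<alpha> f x y)"

text \<open>Superlevel set {x in Omega. |I_alpha f(x)| > t}; points where the defining integral
  does not converge absolutely are counted as belonging to the set (|I_alpha f(x)| = infinity).\<close>
definition riesz_superlevel :: "real \<Rightarrow> 'a::euclidean_space set \<Rightarrow> ('a \<Rightarrow> real) \<Rightarrow> real \<Rightarrow> 'a set" where
  "riesz_superlevel \<alpha> \<Omega> f t =
     {x \<in> \<Omega>. \<not> set_integrable lebesgue \<Omega> (riesz_kernel \<alpha> f x)
              \<or> \<bar>riesz_potential \<alpha> \<Omega> f x\<bar> > t}"

definition omega_const :: "real \<Rightarrow> real" where
  "omega_const \<beta> = pi powr (\<beta> / 2) / Gamma (\<beta> / 2 + 1)"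

definition hausdorff_content :: "real \<Rightarrow> 'a::euclidean_space set \<Rightarrow> ennreal" where
  "hausdorff_content \<beta> E =
     Inf {(\<Sum>i. ennreal (omega_const \<beta> * r i powr \<beta>)) | (c :: nat \<Rightarrow> 'a) (r :: nat \<Rightarrow> real).
            (\<forall>i. r i > 0) \<and> E \<subseteq> (\<Union>i. ball (c i) (r i))}"

end

theory Submission
  imports Defs
begin


lemma omega_const_pos: "\<beta> > 0 \<Longrightarrow> omega_const \<beta> > 0"
  unfolding omega_const_def by (intro divide_pos_pos) (auto intro: Gamma_real_pos)

lemma geom_half_sum: "(\<Sum>n<m. (1::real) / 2 ^ Suc n) \<le> 1"
proof -
  have "(\<Sum>n<m. (1::real) / 2 ^ Suc n) = 1 - 1 / 2 ^ m"
    by (induction m) (auto simp: field_simps)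
  then show ?thesis by simp
qed

lemma hc_le:
  fixes E :: "'a::euclidean_space set" and C :: "'i set" and a :: "'i \<Rightarrow> 'a"
  assumes bpos: "\<beta> > 0" and cC: "countable C" and rpos: "\<And>i. i \<in> C \<Longrightarrow> \<rho> i > 0"
    and cov: "E \<subseteq> (\<Union>i\<in>C. ball (a i) (\<rho> i))"
    and fin: "\<And>F. finite F \<Longrightarrow> F \<subseteq> C \<Longrightarrow> (\<Sum>i\<in>F. omega_const \<beta> * \<rho> i powr \<beta>) \<le> X"
  shows "hausdorff_content \<beta> E \<le> ennreal X"
proof (rule ennreal_le_epsilon)
  fix e :: real assume e: "0 < e"
  define \<omega> where "\<omega> = omega_const \<beta>"
  have om: "\<omega> > 0" using omega_const_pos[OF bpos] by (simp add: \<omega>_def)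
  define h where "h = to_nat_on C"
  define g where "g = inv_into C h"
  have inj: "inj_on h C" unfolding h_def using cC by (rule inj_on_to_nat_on)
  have gh: "\<And>i. i \<in> C \<Longrightarrow> g (h i) = i" using inj by (simp add: g_def)
  have gC: "\<And>n. n \<in> h ` C \<Longrightarrow> g n \<in> C" by (auto simp: gh)
  define r where "r n = (if n \<in> h ` C then \<rho> (g n) else (e / (\<omega> * 2 ^ Suc n)) powr (1 / \<beta>))" for n
  define c where "c n = (if n \<in> h ` C then a (g n) else 0)" for n
  have rp: "\<forall>n. r n > 0" using e om gC rpos by (auto simp: r_def)
  have cov': "E \<subseteq> (\<Union>n. ball (c n) (r n))"
  proof
    fix x assume "x \<in> E"
    then obtain i where i: "i \<in> C" "x \<in> ball (a i) (\<rho> i)" using cov by auto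
    then have "x \<in> ball (c (h i)) (r (h i))" by (auto simp: c_def r_def gh)
    then show "x \<in> (\<Union>n. ball (c n) (r n))" by auto
  qed
  define t where "t n = \<omega> * r n powr \<beta>" for n
  have tnot: "t n = e / 2 ^ Suc n" if "n \<notin> h ` C" for n
  proof -
    have "t n = \<omega> * (e / (\<omega> * 2 ^ Suc n))" using that e om bpos
      by (simp add: t_def r_def powr_powr)
    then show ?thesis using om by simp
  qed
  have t0: "t n \<ge> 0" for n using om rp by (simp add: t_def)
  have psum: "(\<Sum>n<m. t n) \<le> X + e" for m
  proof -
    define F where "F = {i \<in> C. h i < m}"
    have hF: "h ` F = {..<m} \<inter> h ` C" by (auto simp: F_def)
    have injF: "inj_on h F" using inj by (rule inj_on_subset) (auto simp: F_def)
    have fF: "finite F" using injF hF by (metis finite_Int finite_imageD finite_lessThan)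
    have "(\<Sum>n<m. t n) = (\<Sum>n\<in>{..<m} \<inter> h ` C. t n) + (\<Sum>n\<in>{..<m} - h ` C. t n)"
      by (metis Diff_eq finite_lessThan sum.Int_Diff)
    also have "(\<Sum>n\<in>{..<m} \<inter> h ` C. t n) = (\<Sum>i\<in>F. t (h i))"
      by (simp add: hF[symmetric] sum.reindex[OF injF])
    also have "\<dots> = (\<Sum>i\<in>F. omega_const \<beta> * \<rho> i powr \<beta>)"
      by (intro sum.cong) (auto simp: t_def r_def F_def gh \<omega>_def)
    also have "\<dots> \<le> X" using fin fF by (auto simp: F_def)
    also have "(\<Sum>n\<in>{..<m} - h ` C. t n) \<le> (\<Sum>n<m. e / 2 ^ Suc n)"
      by (rule order_trans[OF sum_mono sum_mono2]) (use e in \<open>auto simp: tnot\<close>)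
    also have "\<dots> = e * (\<Sum>n<m. 1 / 2 ^ Suc n)" by (simp add: sum_distrib_left)
    also have "\<dots> \<le> e" using geom_half_sum[of m] e by (simp add: mult_left_le)
    finally show ?thesis by simp
  qed
  have "hausdorff_content \<beta> E \<le> (\<Sum>n. ennreal (omega_const \<beta> * r n powr \<beta>))"
    unfolding hausdorff_content_def by (rule Inf_lower) (use rp cov' in blast)
  also have "\<dots> \<le> ennreal (X + e)"
  proof (rule suminf_le_const)
    show "summable (\<lambda>n. ennreal (omega_const \<beta> * r n powr \<beta>))" by simp
    fix m show "(\<Sum>n<m. ennreal (omega_const \<beta> * r n powr \<beta>)) \<le> ennreal (X + e)"
      using psum[of m] t0 by (simp add: t_def \<omega>_def sum_ennreal ennreal_leI)
  qed
  also have "\<dots> \<le> ennreal X + ennreal e" using e by (auto simp: ennreal_plus_if intro: ennreal_leI)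
  finally show "hausdorff_content \<beta> E \<le> ennreal X + ennreal e" .
qed



lemma young_crude:
  fixes u w \<sigma> p q :: real
  assumes u: "u \<ge> 0" and w: "w > 0" and s: "\<sigma> > 0" and p: "p > 1" and q: "q > 1"
    and pq: "(p - 1) * (q - 1) = 1"
  shows "u * w \<le> \<sigma> powr (1 - p) * u powr p + \<sigma> * w powr q"
proof -
  define s where "s = \<sigma> * w powr (q - 1)"
  have s0: "s > 0" using s w by (simp add: s_def)
  have A: "0 \<le> \<sigma> powr (1 - p) * u powr p" using s by simp
  have wq: "w powr q = w * w powr (q - 1)" using w by (simp add: powr_mult_base)
  show ?thesis
  proof (cases "u \<le> s")
    case True
    then have "u * w \<le> s * w" using w by (simp add: mult_right_mono)
    also have "\<dots> = \<sigma> * w powr q" by (simp add: s_def wq)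
    finally show ?thesis using A by linarith
  next
    case False
    then have us: "u > s" by simp
    have "s powr (p - 1) = \<sigma> powr (p - 1) * w" using s w pq
      by (simp add: s_def powr_mult powr_powr mult.commute[of "q - 1"])
    moreover have "s powr (p - 1) \<le> u powr (p - 1)" using us s0 p by (intro powr_mono2) auto
    ultimately have "\<sigma> powr (p - 1) * w \<le> u powr (p - 1)" by simp
    then have e1: "\<sigma> powr (1 - p) * (\<sigma> powr (p - 1) * w) * u \<le> \<sigma> powr (1 - p) * u powr (p - 1) * u"
      using s u by (intro mult_right_mono mult_left_mono) auto
    have e2: "\<sigma> powr (1 - p) * (\<sigma> powr (p - 1) * w) = w" using s
      by (simp add: powr_add[symmetric] mult.assoc[symmetric])
    have e3: "u powr (p - 1) * u = u powr p" using us s0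
      by (simp add: powr_mult_base mult.commute)
    have "u * w = \<sigma> powr (1 - p) * (\<sigma> powr (p - 1) * w) * u" using e2 by simp
    also have "\<dots> \<le> \<sigma> powr (1 - p) * u powr (p - 1) * u" by (rule e1)
    also have "\<dots> = \<sigma> powr (1 - p) * u powr p" using e3 by (simp add: mult.assoc)
    finally have "u * w \<le> \<sigma> powr (1 - p) * u powr p" .
    then show ?thesis using s w by (smt (verit) mult_pos_pos powr_gt_zero)
  qed
qed



lemma ennreal_suminf_split: "(\<Sum>n. (w n::ennreal)) = (\<Sum>k. w (k + M)) + (\<Sum>n<M. w n)"
proof (induction M)
  case 0 then show ?case by simp
next
  case (Suc M)
  have "(\<lambda>k. w (k + M)) sums ((\<Sum>k. w (Suc k + M)) + w (0 + M))"
    using sums_Suc[OF summable_sums[OF summableI, of "\<lambda>k. w (Suc k + M)"]] by simp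
  then have "(\<Sum>k. w (k + M)) = (\<Sum>k. w (k + Suc M)) + w M" 
    by (simp add: sums_unique[symmetric])
  then show ?case using Suc by (simp add: add.assoc add.commute)
qed

lemma good_bound:
  fixes \<Omega> :: "'a::euclidean_space set" and f :: "'a \<Rightarrow> real"
  assumes \<Omega>s: "\<Omega> \<in> sets lebesgue" and a0: "0 < \<alpha>" and aN: "\<alpha> < real DIM('a)" and b0: "0 < \<beta>"
    and fm: "f \<in> borel_measurable (lebesgue_on \<Omega>)"
    and fint: "(\<integral>\<^sup>+y. ennreal (\<bar>f y\<bar> powr (real DIM('a) / \<alpha>)) * indicator \<Omega> y \<partial>lebesgue) \<le> 1"
    and D: "D > 0" and xD: "\<forall>y\<in>\<Omega>. dist x y < D" and M: "M \<ge> 1"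
    and good: "\<forall>k. (\<integral>\<^sup>+y. ennreal (\<bar>f y\<bar> powr (real DIM('a) / \<alpha>)) * indicator \<Omega> y
                      * indicator (ball x (D / 2 ^ (M + k))) y \<partial>lebesgue) \<le> ennreal (2 powr (- real k * \<beta>))"
  shows "(\<integral>\<^sup>+y. ennreal (norm (indicator \<Omega> y *\<^sub>R riesz_kernel \<alpha> f x y)) \<partial>lebesgue)
     \<le> ennreal ((1 + 2 ^ DIM('a) * measure lebesgue (ball (0::'a) 1)) *
           (real M powr ((real DIM('a) - \<alpha>) / real DIM('a)) + 1 / (1 - 2 powr (- \<beta> / (real DIM('a) / \<alpha>)))))"
proof -
  define N where "N = real DIM('a)"
  define p where "p = N / \<alpha>"
  define q where "q = N / (N - \<alpha>)"
  have N0: "N > 0" by (simp add: N_def)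
  have p1: "p > 1" using a0 aN by (simp add: p_def N_def)
  have q1: "q > 1" using a0 aN by (simp add: q_def N_def)
  have pq: "(p - 1) * (q - 1) = 1" using a0 aN N0 unfolding p_def q_def N_def[symmetric]
    by (simp add: field_simps)
  define F where "F y = indicator \<Omega> y * f y" for y
  have Fm: "F \<in> borel_measurable lebesgue"
    using fm \<Omega>s unfolding F_def by (subst (asm) borel_measurable_restrict_space_iff) auto
  define g where "g y = \<bar>F y\<bar> powr p" for y
  have gm: "g \<in> borel_measurable lebesgue" unfolding g_def using Fm by measurable
  have g0: "g y \<ge> 0" for y by (simp add: g_def)
  have gF: "ennreal (g y) = ennreal (\<bar>f y\<bar> powr (real DIM('a) / \<alpha>)) * indicator \<Omega> y" for y
    by (auto simp: g_def F_def p_def N_def indicator_def)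
  have gint: "(\<integral>\<^sup>+y. ennreal (g y) \<partial>lebesgue) \<le> 1" using fint by (simp add: gF)
  define r where "r n = D / 2 ^ n" for n :: nat
  have r0: "r n > 0" for n using D by (simp add: r_def)
  have rS: "r n = 2 * r (Suc n)" for n by (simp add: r_def)
  define T where "T n = ball x (r n) - ball x (r (Suc n))" for n
  have Ts: "T n \<in> sets lebesgue" for n by (simp add: T_def)
  define V where "V = measure lebesgue (ball (0::'a) 1)"
  have V0: "V \<ge> 0" by (simp add: V_def)
  have emB: "emeasure lebesgue (ball (z::'a) (r n)) = ennreal (r n ^ DIM('a) * V)" for n z
  proof -
    have "emeasure lebesgue (ball z (r n)) = ennreal (r n ^ DIM('a)) * emeasure lebesgue (ball (0::'a) 1)"
      using r0[of n] by (intro emeasure_lebesgue_ball_conv_unit_ball) (simp add: less_imp_le)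
    also have "emeasure lebesgue (ball (0::'a) 1) = ennreal V" unfolding V_def
      using emeasure_lborel_ball_finite[of "0::'a" 1] by (subst emeasure_eq_ennreal_measure) auto
    finally show ?thesis using r0[of n] V0 by (simp add: ennreal_mult)
  qed
  have emT: "emeasure lebesgue (T n) \<le> ennreal (r n ^ DIM('a) * V)" for n
  proof -
    have "emeasure lebesgue (T n) \<le> emeasure lebesgue (ball x (r n))"
      by (rule emeasure_mono) (auto simp: T_def)
    then show ?thesis by (simp add: emB)
  qed
  define \<sigma> where "\<sigma> n = (if n < M then real M powr (- 1 / p) else 2 powr (- real (n - M) * \<beta> / p))" for n
  have \<sigma>0: "\<sigma> n > 0" for n using M by (simp add: \<sigma>_def)
  define h where "h y = norm (indicator \<Omega> y *\<^sub>R riesz_kernel \<alpha> f x y)" for y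
  define u where "u n y = ennreal (indicator (T n) y * (\<sigma> n powr (1 - p) * g y + \<sigma> n * r (Suc n) powr (- N)))" for n y
  have um: "u n \<in> borel_measurable lebesgue" for n unfolding u_def using gm Ts by measurable
  have pw: "ennreal (h y) \<le> (\<Sum>n. u n y)" for y
  proof (cases "y \<in> \<Omega> \<and> y \<noteq> x")
    case False
    then have "h y = 0" by (auto simp: h_def riesz_kernel_def)
    then show ?thesis by simp
  next
    case True
    define d where "d = dist x y"
    have d0: "d > 0" and dD: "d < D" using True xD by (auto simp: d_def)
    have ex: "\<exists>n. r (Suc n) \<le> d"
    proof -
      obtain n where "D / d < 2 ^ n" using real_arch_pow[of 2 "D / d"] by auto
      then have "r n < d" using d0 by (simp add: r_def field_simps)
      moreover have "r (Suc n) \<le> r n" using r0[of "Suc n"] rS[of n] by simp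
      ultimately show ?thesis by (intro exI[of _ n]) linarith
    qed
    define n where "n = (LEAST n. r (Suc n) \<le> d)"
    have n1: "r (Suc n) \<le> d" unfolding n_def by (rule LeastI_ex[OF ex])
    have n2: "d < r n"
    proof (cases n)
      case 0 then show ?thesis using dD by (simp add: r_def)
    next
      case (Suc m)
      have "\<not> r (Suc m) \<le> d" using not_less_Least[of m "\<lambda>n. r (Suc n) \<le> d"] Suc n_def by auto
      then show ?thesis using Suc by simp
    qed
    have yT: "y \<in> T n" using n1 n2 by (simp add: T_def d_def)
    have dinv: "d powr (\<alpha> - N) = 1 / d powr (N - \<alpha>)"
      using powr_minus_divide[of d "N - \<alpha>"] by simp
    have heq0: "h y = \<bar>f y\<bar> / d powr (N - \<alpha>)"
      using True by (simp add: h_def riesz_kernel_def d_def dist_norm N_def abs_mult)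
    have heq: "h y = \<bar>f y\<bar> * d powr (\<alpha> - N)" by (simp add: heq0 dinv)
    have y1: "h y \<le> \<sigma> n powr (1 - p) * \<bar>f y\<bar> powr p + \<sigma> n * (d powr (\<alpha> - N)) powr q"
      unfolding heq using d0 \<sigma>0[of n] p1 q1 pq by (intro young_crude) auto
    have "(\<alpha> - N) * q = - N" using a0 aN by (simp add: q_def N_def field_simps)
    then have y2: "(d powr (\<alpha> - N)) powr q = d powr (- N)" by (simp add: powr_powr)
    have y3: "d powr (- N) \<le> r (Suc n) powr (- N)" using n1 r0[of "Suc n"] N0 by (intro powr_mono2') auto
    have gy: "g y = \<bar>f y\<bar> powr p" using True by (simp add: g_def F_def)
    have "h y \<le> \<sigma> n powr (1 - p) * g y + \<sigma> n * r (Suc n) powr (- N)"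
      using y1 y2 y3 gy \<sigma>0[of n] by (smt (verit) mult_left_mono)
    then have "ennreal (h y) \<le> u n y" using yT by (simp add: u_def ennreal_leI)
    also have "u n y = (\<Sum>m\<in>{n}. u m y)" by simp
    also have "\<dots> \<le> (\<Sum>m. u m y)" by (rule sum_le_suminf) auto
    finally show ?thesis .
  qed
  define G where "G n = (\<integral>\<^sup>+y. ennreal (g y) * indicator (T n) y \<partial>lebesgue)" for n
  have intu: "(\<integral>\<^sup>+y. u n y \<partial>lebesgue) \<le> ennreal (\<sigma> n powr (1 - p)) * G n + ennreal (\<sigma> n * 2 ^ DIM('a) * V)" for n
  proof -
    define a where "a = \<sigma> n powr (1 - p)"
    define b where "b = \<sigma> n * r (Suc n) powr (- N)"
    have a0: "a \<ge> 0" and b0': "b \<ge> 0" using \<sigma>0[of n] r0[of "Suc n"] by (auto simp: a_def b_def)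
    have ueq: "u n y = ennreal a * (ennreal (g y) * indicator (T n) y) + ennreal b * indicator (T n) y" for y
    proof (cases "y \<in> T n")
      case True
      have "ennreal (a * g y + b) = ennreal (a * g y) + ennreal b"
        using a0 b0' g0[of y] by (intro ennreal_plus) auto
      also have "ennreal (a * g y) = ennreal a * ennreal (g y)" using a0 g0[of y] by (rule ennreal_mult)
      finally show ?thesis using True by (simp add: u_def a_def[symmetric] b_def[symmetric])
    qed (simp add: u_def)
    have bV: "b * (r n ^ DIM('a) * V) = \<sigma> n * 2 ^ DIM('a) * V"
    proof -
      have rr: "r (Suc n) powr (- N) * r (Suc n) ^ DIM('a) = 1"
        using r0[of "Suc n"] by (simp add: N_def powr_realpow[symmetric] powr_add[symmetric])
      have "b * (r n ^ DIM('a) * V) = \<sigma> n * (r (Suc n) powr (- N) * r (Suc n) ^ DIM('a)) * 2 ^ DIM('a) * V"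
        by (simp add: b_def rS[of n] power_mult_distrib)
      then show ?thesis by (simp add: rr)
    qed
    have eb: "ennreal b * ennreal (r n ^ DIM('a) * V) = ennreal (\<sigma> n * 2 ^ DIM('a) * V)"
      using b0' V0 r0[of n] by (simp add: ennreal_mult[symmetric] bV)
    have "(\<integral>\<^sup>+y. u n y \<partial>lebesgue) = (\<integral>\<^sup>+y. ennreal a * (ennreal (g y) * indicator (T n) y) \<partial>lebesgue)
        + (\<integral>\<^sup>+y. ennreal b * indicator (T n) y \<partial>lebesgue)"
      unfolding ueq using gm Ts by (intro nn_integral_add) auto
    also have "\<dots> = ennreal a * G n + ennreal b * emeasure lebesgue (T n)"
      unfolding G_def using gm Ts by (simp add: nn_integral_cmult nn_integral_cmult_indicator)
    also have "\<dots> \<le> ennreal a * G n + ennreal b * ennreal (r n ^ DIM('a) * V)"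
      by (intro add_mono mult_left_mono emT) auto
    finally show ?thesis by (simp add: a_def eb)
  qed
  have Gsum: "(\<Sum>n<M. G n) \<le> 1"
  proof -
    have ranti: "r n \<le> r m" if "m \<le> n" for m n
      using D that by (simp add: r_def divide_left_mono power_increasing)
    have disj: "disjoint_family T"
      unfolding disjoint_family_on_def
    proof (intro ballI impI)
      fix m n :: nat assume "m \<noteq> n"
      then consider "m < n" | "n < m" by linarith
      then show "T m \<inter> T n = {}"
      proof cases
        case 1
        then have "r n \<le> r (Suc m)" by (intro ranti) simp
        then show ?thesis by (auto simp: T_def)
      next
        case 2
        then have "r m \<le> r (Suc n)" by (intro ranti) simp
        then show ?thesis by (auto simp: T_def)
      qed
    qed
    have "(\<Sum>n<M. G n) \<le> (\<Sum>n. G n)" by (rule sum_le_suminf) auto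
    also have "\<dots> = (\<integral>\<^sup>+y. (\<Sum>n. ennreal (g y) * indicator (T n) y) \<partial>lebesgue)"
      unfolding G_def using gm Ts by (intro nn_integral_suminf[symmetric]) auto
    also have "\<dots> = (\<integral>\<^sup>+y. ennreal (g y) * indicator (\<Union>n. T n) y \<partial>lebesgue)"
      by (simp add: suminf_indicator[OF disj])
    also have "\<dots> \<le> (\<integral>\<^sup>+y. ennreal (g y) \<partial>lebesgue)"
      by (intro nn_integral_mono) (auto simp: indicator_def)
    also have "\<dots> \<le> 1" by (rule gint)
    finally show ?thesis .
  qed
  have Gk: "G (k + M) \<le> ennreal (2 powr (- real k * \<beta>))" for k
  proof -
    have "G (k + M) \<le> (\<integral>\<^sup>+y. ennreal (g y) * indicator (ball x (r (k + M))) y \<partial>lebesgue)"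
      unfolding G_def by (intro nn_integral_mono) (auto simp: T_def indicator_def)
    also have "\<dots> = (\<integral>\<^sup>+y. ennreal (\<bar>f y\<bar> powr (real DIM('a) / \<alpha>)) * indicator \<Omega> y
                      * indicator (ball x (D / 2 ^ (M + k))) y \<partial>lebesgue)"
      by (simp add: gF r_def add.commute)
    also have "\<dots> \<le> ennreal (2 powr (- real k * \<beta>))" using good by blast
    finally show ?thesis .
  qed
  define \<rho> where "\<rho> = 2 powr (- \<beta> / p)"
  have \<rho>: "0 < \<rho>" "\<rho> < 1"
  proof -
    show "0 < \<rho>" by (simp add: \<rho>_def)
    have "2 powr (- \<beta> / p) < 2 powr 0" using b0 p1 by (intro powr_less_mono) auto
    then show "\<rho> < 1" by (simp add: \<rho>_def)
  qed
  define K0 where "K0 = 1 + 2 ^ DIM('a) * V"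
  define w where "w n = ennreal (\<sigma> n powr (1 - p)) * G n + ennreal (\<sigma> n * 2 ^ DIM('a) * V)" for n
  have wlow: "(\<Sum>n<M. w n) \<le> ennreal (K0 * real M powr ((p - 1) / p))"
  proof -
    have Mp: "real M > 0" using M by simp
    define a where "a = real M powr ((p - 1) / p)"
    define b where "b = real M powr (- 1 / p) * 2 ^ DIM('a) * V"
    have a0: "a \<ge> 0" by (simp add: a_def)
    have b0': "b \<ge> 0" using V0 by (simp add: b_def)
    have aeq: "(real M powr (- 1 / p)) powr (1 - p) = a"
    proof -
      have "- 1 / p * (1 - p) = (p - 1) / p" using p1 by (simp add: field_simps)
      then show ?thesis by (simp add: a_def powr_powr)
    qed
    have Mb: "real M * b = a * 2 ^ DIM('a) * V"
    proof -
      have "real M * real M powr (- 1 / p) = real M powr (1 + - 1 / p)" using Mp by (intro powr_mult_base) simp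
      also have "1 + - 1 / p = (p - 1) / p" using p1 by (simp add: field_simps)
      finally show ?thesis by (simp add: a_def b_def mult.assoc[symmetric])
    qed
    have "(\<Sum>n<M. w n) = (\<Sum>n<M. ennreal a * G n + ennreal b)"
      using aeq by (intro sum.cong) (auto simp: w_def \<sigma>_def b_def)
    also have "\<dots> = ennreal a * (\<Sum>n<M. G n) + of_nat M * ennreal b"
      by (simp add: sum.distrib sum_distrib_left)
    also have "\<dots> \<le> ennreal a * 1 + of_nat M * ennreal b"
      by (intro add_mono mult_left_mono Gsum) auto
    also have "of_nat M * ennreal b = ennreal (real M * b)"
      using b0' by (simp add: ennreal_mult ennreal_of_nat_eq_real_of_nat)
    also have "ennreal a * 1 + ennreal (real M * b) = ennreal (a + real M * b)"
      using a0 b0' by (simp add: ennreal_plus)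
    also have "a + real M * b = K0 * real M powr ((p - 1) / p)"
      using Mb by (simp add: K0_def a_def algebra_simps)
    finally show ?thesis .
  qed
  have whigh: "(\<Sum>k. w (k + M)) \<le> ennreal (K0 * (1 / (1 - \<rho>)))"
  proof -
    have rk: "\<rho> ^ k = 2 powr (- real k * \<beta> / p)" for k
    proof -
      have "\<rho> ^ k = \<rho> powr real k" using \<rho> by (simp add: powr_realpow)
      also have "\<dots> = 2 powr (- \<beta> / p * real k)" by (simp add: \<rho>_def powr_powr)
      finally show ?thesis by (simp add: algebra_simps)
    qed
    have wk: "w (k + M) \<le> ennreal (K0 * \<rho> ^ k)" for k
    proof -
      define s where "s = 2 powr (- real k * \<beta> / p)"
      have sk: "\<sigma> (k + M) = s" by (simp add: \<sigma>_def s_def)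
      have e1: "s powr (1 - p) * 2 powr (- real k * \<beta>) = \<rho> ^ k"
      proof -
        have "s powr (1 - p) * 2 powr (- real k * \<beta>) = 2 powr (- real k * \<beta> / p * (1 - p) + - real k * \<beta>)"
          by (simp add: s_def powr_powr powr_add[symmetric])
        also have "- real k * \<beta> / p * (1 - p) + - real k * \<beta> = - real k * \<beta> / p"
          using p1 by (simp add: field_simps)
        finally show ?thesis by (simp add: rk)
      qed
      have "w (k + M) = ennreal (s powr (1 - p)) * G (k + M) + ennreal (s * 2 ^ DIM('a) * V)"
        by (simp add: w_def sk)
      also have "\<dots> \<le> ennreal (s powr (1 - p)) * ennreal (2 powr (- real k * \<beta>)) + ennreal (s * 2 ^ DIM('a) * V)"
        by (intro add_mono mult_left_mono Gk) auto
      also have "ennreal (s powr (1 - p)) * ennreal (2 powr (- real k * \<beta>)) = ennreal (\<rho> ^ k)"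
        using e1 by (simp add: ennreal_mult[symmetric])
      also have "ennreal (\<rho> ^ k) + ennreal (s * 2 ^ DIM('a) * V) = ennreal (K0 * \<rho> ^ k)"
        using V0 \<rho> by (simp add: ennreal_plus[symmetric] K0_def s_def rk algebra_simps del: ennreal_plus)
      finally show ?thesis .
    qed
    have K0p: "K0 \<ge> 0" using V0 by (simp add: K0_def)
    have sm: "summable (\<lambda>k. K0 * \<rho> ^ k)" using \<rho> by (intro summable_mult) simp
    have "(\<Sum>k. w (k + M)) \<le> (\<Sum>k. ennreal (K0 * \<rho> ^ k))" by (intro suminf_le wk) auto
    also have "\<dots> = ennreal (\<Sum>k. K0 * \<rho> ^ k)" using K0p \<rho> sm by (intro suminf_ennreal2) auto
    also have "(\<Sum>k. K0 * \<rho> ^ k) = K0 * (1 / (1 - \<rho>))"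
      using \<rho> by (simp add: suminf_mult suminf_geometric)
    finally show ?thesis .
  qed
  have "(\<integral>\<^sup>+y. ennreal (h y) \<partial>lebesgue) \<le> (\<integral>\<^sup>+y. (\<Sum>n. u n y) \<partial>lebesgue)"
    by (intro nn_integral_mono pw)
  also have "\<dots> = (\<Sum>n. \<integral>\<^sup>+y. u n y \<partial>lebesgue)" using um by (rule nn_integral_suminf)
  also have "\<dots> \<le> (\<Sum>n. w n)" by (intro suminf_le) (auto simp: w_def intu)
  also have "\<dots> = (\<Sum>k. w (k + M)) + (\<Sum>n<M. w n)" by (rule ennreal_suminf_split)
  also have "\<dots> \<le> ennreal (K0 * (1 / (1 - \<rho>))) + ennreal (K0 * real M powr ((p - 1) / p))"
    by (intro add_mono whigh wlow)
  also have "\<dots> = ennreal (K0 * (real M powr ((p - 1) / p) + 1 / (1 - \<rho>)))"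
    using \<rho> V0 by (simp add: K0_def ennreal_plus[symmetric] algebra_simps del: ennreal_plus)
  also have "(p - 1) / p = (N - \<alpha>) / N" using a0 N0 by (simp add: p_def field_simps)
  finally show ?thesis by (simp add: h_def K0_def V_def \<rho>_def p_def N_def)
qed



lemma riesz_gamma_pos:
  assumes "0 < \<alpha>" "\<alpha> < real N" shows "riesz_gamma N \<alpha> > 0"
  unfolding riesz_gamma_def using assms
  by (intro divide_pos_pos mult_pos_pos Gamma_real_pos) auto

lemma good_consequence:
  fixes \<Omega> :: "'a::euclidean_space set" and f :: "'a \<Rightarrow> real"
  assumes \<Omega>s: "\<Omega> \<in> sets lebesgue" and a0: "0 < \<alpha>" and aN: "\<alpha> < real DIM('a)"
    and fm: "f \<in> borel_measurable (lebesgue_on \<Omega>)"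
    and B0: "B \<ge> 0" and B: "(\<integral>\<^sup>+y. ennreal (norm (indicator \<Omega> y *\<^sub>R riesz_kernel \<alpha> f x y)) \<partial>lebesgue) \<le> ennreal B"
  shows "set_integrable lebesgue \<Omega> (riesz_kernel \<alpha> f x)
     \<and> \<bar>riesz_potential \<alpha> \<Omega> f x\<bar> \<le> B / riesz_gamma DIM('a) \<alpha>"
proof -
  define F where "F y = indicator \<Omega> y * f y" for y
  have Fm: "F \<in> borel_measurable lebesgue"
    using fm \<Omega>s unfolding F_def by (subst (asm) borel_measurable_restrict_space_iff) auto
  have eq: "(\<lambda>y. indicator \<Omega> y *\<^sub>R riesz_kernel \<alpha> f x y) = (\<lambda>y. F y / norm (x - y) powr (real DIM('a) - \<alpha>))"
    by (auto simp: F_def riesz_kernel_def fun_eq_iff)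
  have km: "(\<lambda>y. indicator \<Omega> y *\<^sub>R riesz_kernel \<alpha> f x y) \<in> borel_measurable lebesgue"
  proof -
    note [measurable] = id_borel_measurable_lebesgue[unfolded id_def]
    show ?thesis unfolding eq using Fm by measurable
  qed
  have int: "integrable lebesgue (\<lambda>y. indicator \<Omega> y *\<^sub>R riesz_kernel \<alpha> f x y)"
  proof (rule integrableI_bounded[OF km])
    show "(\<integral>\<^sup>+y. ennreal (norm (indicator \<Omega> y *\<^sub>R riesz_kernel \<alpha> f x y)) \<partial>lebesgue) < \<infinity>"
      using B by (rule le_less_trans) simp
  qed
  have "ennreal (norm (LINT y:\<Omega>|lebesgue. riesz_kernel \<alpha> f x y)) \<le> 
      (\<integral>\<^sup>+y. ennreal (norm (indicator \<Omega> y *\<^sub>R riesz_kernel \<alpha> f x y)) \<partial>lebesgue)"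
    unfolding set_lebesgue_integral_def by (rule integral_norm_bound_ennreal[OF int])
  also have "\<dots> \<le> ennreal B" by (rule B)
  finally have nb: "norm (LINT y:\<Omega>|lebesgue. riesz_kernel \<alpha> f x y) \<le> B"
    using B0 by (simp add: ennreal_le_iff)
  have g: "riesz_gamma DIM('a) \<alpha> > 0" using a0 aN by (rule riesz_gamma_pos)
  have "\<bar>riesz_potential \<alpha> \<Omega> f x\<bar> = \<bar>LINT y:\<Omega>|lebesgue. riesz_kernel \<alpha> f x y\<bar> / riesz_gamma DIM('a) \<alpha>"
    using g by (simp add: riesz_potential_def abs_mult)
  also have "\<dots> \<le> B / riesz_gamma DIM('a) \<alpha>" using nb g by (intro divide_right_mono) auto
  finally show ?thesis using int by (simp add: set_integrable_def)
qed

lemma bad_content: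
  fixes \<Omega> :: "'a::euclidean_space set" and f :: "'a \<Rightarrow> real"
  assumes \<Omega>s: "\<Omega> \<in> sets lebesgue" and b0: "0 < \<beta>" and P0: "P > 0"
    and fm: "f \<in> borel_measurable (lebesgue_on \<Omega>)"
    and gint: "(\<integral>\<^sup>+y. ennreal (\<bar>f y\<bar> powr P) * indicator \<Omega> y \<partial>lebesgue) \<le> 1"
    and D: "D > 0"
  shows "hausdorff_content \<beta> {x \<in> \<Omega>. \<exists>k::nat. ennreal (2 powr (- real k * \<beta>)) <
            (\<integral>\<^sup>+y. ennreal (\<bar>f y\<bar> powr P) * indicator \<Omega> y * indicator (ball x (D / 2 ^ (M + k))) y \<partial>lebesgue)}
     \<le> ennreal (omega_const \<beta> * (5 * D) powr \<beta> * 2 powr (- real M * \<beta>))"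
proof -
  define G where "G y = ennreal (\<bar>f y\<bar> powr P) * indicator \<Omega> y" for y
  define F where "F y = indicator \<Omega> y * f y" for y
  have Fm: "F \<in> borel_measurable lebesgue"
    using fm \<Omega>s unfolding F_def by (subst (asm) borel_measurable_restrict_space_iff) auto
  have GF: "G y = ennreal (\<bar>F y\<bar> powr P)" for y using P0 by (auto simp: G_def F_def indicator_def)
  have Gm: "G \<in> borel_measurable lebesgue" unfolding GF[abs_def] using Fm by measurable
  define rad where "rad i = D / 2 ^ (M + snd i)" for i :: "'a \<times> nat"
  define B where "B i = ball (fst i) (rad i)" for i
  define K where "K = {i. fst i \<in> \<Omega> \<and> ennreal (2 powr (- real (snd i) * \<beta>)) <
            (\<integral>\<^sup>+y. G y * indicator (B i) y \<partial>lebesgue)}"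
  define Bad where "Bad = {x \<in> \<Omega>. \<exists>k::nat. ennreal (2 powr (- real k * \<beta>)) <
            (\<integral>\<^sup>+y. ennreal (\<bar>f y\<bar> powr P) * indicator \<Omega> y * indicator (ball x (D / 2 ^ (M + k))) y \<partial>lebesgue)}"
  have rad0: "0 < rad i \<and> rad i \<le> D" for i
  proof -
    have "(1::real) \<le> 2 ^ (M + snd i)" by simp
    then show ?thesis using D by (auto simp: rad_def field_simps)
  qed
  have rad0': "\<And>i. i \<in> K \<Longrightarrow> 0 < rad i \<and> rad i \<le> D" using rad0 by blast
  have cov: "Bad \<subseteq> (\<Union>i\<in>K. ball (fst i) (rad i))"
  proof
    fix x assume "x \<in> Bad"
    then obtain k where x: "x \<in> \<Omega>" "ennreal (2 powr (- real k * \<beta>)) <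
            (\<integral>\<^sup>+y. ennreal (\<bar>f y\<bar> powr P) * indicator \<Omega> y * indicator (ball x (D / 2 ^ (M + k))) y \<partial>lebesgue)"
      by (auto simp: Bad_def)
    then have "(x, k) \<in> K" by (simp add: K_def B_def rad_def G_def)
    moreover have "x \<in> ball (fst (x, k)) (rad (x, k))" using rad0[of "(x, k)"] by simp
    ultimately show "x \<in> (\<Union>i\<in>K. ball (fst i) (rad i))" by blast
  qed
  obtain C where C: "countable C" "C \<subseteq> K"
     "pairwise (\<lambda>i j. disjnt (ball (fst i) (rad i)) (ball (fst j) (rad j))) C"
     "Bad \<subseteq> (\<Union>i\<in>C. ball (fst i) (5 * rad i))"
    by (rule Vitali_covering_lemma_balls[OF cov rad0'])
  have "hausdorff_content \<beta> Bad \<le> ennreal (omega_const \<beta> * (5 * D) powr \<beta> * 2 powr (- real M * \<beta>))"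
  proof (rule hc_le[OF b0 C(1) _ C(4)])
    show "\<And>i. i \<in> C \<Longrightarrow> 0 < 5 * rad i" using rad0 by simp
    fix I assume I: "finite I" "I \<subseteq> C"
    have radp: "(5 * rad i) powr \<beta> = (5 * D) powr \<beta> * 2 powr (- real M * \<beta>) * 2 powr (- real (snd i) * \<beta>)" for i
    proof -
      have "(2::real) ^ (M + snd i) = 2 powr (real M + real (snd i))"
        by (simp add: powr_realpow[symmetric])
      then have "(5 * rad i) powr \<beta> = (5 * D) powr \<beta> / (2 powr (real M + real (snd i))) powr \<beta>"
        using D by (simp add: rad_def powr_divide)
      also have "\<dots> = (5 * D) powr \<beta> * 2 powr (- real M * \<beta>) * 2 powr (- real (snd i) * \<beta>)"
        by (simp add: powr_powr powr_minus_divide powr_add[symmetric] algebra_simps)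
      finally show ?thesis .
    qed
    have Bm: "(\<lambda>y. G y * indicator (B i) y) \<in> borel_measurable lebesgue" for i
    proof -
      have [measurable]: "B i \<in> sets lebesgue" by (simp add: B_def)
      show ?thesis using Gm by measurable
    qed
    have disj: "disjoint_family_on B I"
      using C(3) I(2) unfolding disjoint_family_on_def pairwise_def disjnt_def B_def by blast
    have "ennreal (\<Sum>i\<in>I. 2 powr (- real (snd i) * \<beta>)) = (\<Sum>i\<in>I. ennreal (2 powr (- real (snd i) * \<beta>)))"
      by simp
    also have "\<dots> \<le> (\<Sum>i\<in>I. \<integral>\<^sup>+y. G y * indicator (B i) y \<partial>lebesgue)"
      using I C(2) by (intro sum_mono) (auto simp: K_def less_imp_le)
    also have "\<dots> = (\<integral>\<^sup>+y. (\<Sum>i\<in>I. G y * indicator (B i) y) \<partial>lebesgue)"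
      using Bm by (intro nn_integral_sum[symmetric]) auto
    also have "\<dots> = (\<integral>\<^sup>+y. G y * indicator (\<Union>(B ` I)) y \<partial>lebesgue)"
      by (simp add: sum_distrib_left[symmetric] indicator_UN_disjoint[OF I(1) disj])
    also have "\<dots> \<le> (\<integral>\<^sup>+y. G y \<partial>lebesgue)"
      by (intro nn_integral_mono) (auto simp: indicator_def)
    also have "\<dots> \<le> 1" using gint by (simp add: G_def)
    finally have S1: "(\<Sum>i\<in>I. 2 powr (- real (snd i) * \<beta>)) \<le> 1" by (simp add: ennreal_le_1)
    have "(\<Sum>i\<in>I. omega_const \<beta> * (5 * rad i) powr \<beta>)
        = omega_const \<beta> * (5 * D) powr \<beta> * 2 powr (- real M * \<beta>) * (\<Sum>i\<in>I. 2 powr (- real (snd i) * \<beta>))"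
      by (simp add: radp sum_distrib_left mult.assoc)
    also have "\<dots> \<le> omega_const \<beta> * (5 * D) powr \<beta> * 2 powr (- real M * \<beta>) * 1"
      using omega_const_pos[OF b0] S1 by (intro mult_left_mono) auto
    finally show "(\<Sum>i\<in>I. omega_const \<beta> * (5 * rad i) powr \<beta>) \<le> omega_const \<beta> * (5 * D) powr \<beta> * 2 powr (- real M * \<beta>)"
      by simp
  qed
  then show ?thesis by (simp add: Bad_def)
qed



lemma hc_mono: "E \<subseteq> F \<Longrightarrow> hausdorff_content \<beta> E \<le> hausdorff_content \<beta> F"
  unfolding hausdorff_content_def by (rule Inf_superset_mono) blast

theorem theorem1p3:
  fixes \<Omega> :: "'a::euclidean_space set" and \<alpha> \<beta> :: real
  assumes "open \<Omega>" and "bounded \<Omega>"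
    and "0 < \<alpha>" and "\<alpha> < real DIM('a)"
    and "0 < \<beta>" and "\<beta> \<le> real DIM('a)"
  shows "\<exists>c C. c > 0 \<and> C > 0 \<and>
     (\<forall>f :: 'a \<Rightarrow> real. \<forall>t :: real.
        f \<in> borel_measurable (lebesgue_on \<Omega>)
        \<and> (\<integral>\<^sup>+ x \<in> \<Omega>. ennreal (\<bar>f x\<bar> powr (real DIM('a) / \<alpha>)) \<partial>lebesgue) \<le> 1
        \<and> t > 0
        \<longrightarrow> hausdorff_content \<beta> (riesz_superlevel \<alpha> \<Omega> f t)
              \<le> ennreal (C * exp (- c * t powr (real DIM('a) / (real DIM('a) - \<alpha>)))))"
proof -
  note a0 = assms(3) and aN = assms(4) and b0 = assms(5)
  define N where "N = real DIM('a)"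
  have N0: "N > 0" by (simp add: N_def)
  define p where "p = N / \<alpha>"
  have p0: "p > 0" using a0 N0 by (simp add: p_def)
  define q where "q = N / (N - \<alpha>)"
  define e1 where "e1 = (N - \<alpha>) / N"
  have q1: "q \<ge> 1" using a0 aN by (simp add: q_def N_def)
  have qe: "q * e1 = 1" using a0 aN N0 by (simp add: q_def e1_def N_def)
  have \<Omega>s: "\<Omega> \<in> sets lebesgue" using assms(1) by simp
  obtain R where R: "R > 0" "\<Omega> \<subseteq> ball 0 R" using assms(2) bounded_subset_ballD by blast
  define D where "D = 2 * R"
  have D0: "D > 0" using R by (simp add: D_def)
  have xD: "\<forall>y\<in>\<Omega>. dist x y < D" if "x \<in> \<Omega>" for x
  proof
    fix y assume "y \<in> \<Omega>"
    then have "dist 0 x < R" "dist 0 y < R" using that R by auto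
    then show "dist x y < D" unfolding D_def by (metis dist_commute dist_triangle_lt add_strict_mono mult_2)
  qed
  define V where "V = measure lebesgue (ball (0::'a) 1)"
  have V0: "V \<ge> 0" by (simp add: V_def)
  define K0 where "K0 = 1 + 2 ^ DIM('a) * V"
  have K0: "K0 > 0" using V0 by (simp add: K0_def add_pos_nonneg)
  define \<rho> where "\<rho> = 2 powr (- \<beta> / (real DIM('a) / \<alpha>))"
  have \<rho>1: "\<rho> < 1"
  proof -
    have "2 powr (- \<beta> / (real DIM('a) / \<alpha>)) < 2 powr 0" using b0 a0 by (intro powr_less_mono) auto
    then show ?thesis by (simp add: \<rho>_def)
  qed
  define Kg where "Kg = 1 / (1 - \<rho>)"
  have Kg: "Kg > 0" using \<rho>1 by (simp add: Kg_def)
  define \<gamma> where "\<gamma> = riesz_gamma DIM('a) \<alpha>"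
  have \<gamma>: "\<gamma> > 0" unfolding \<gamma>_def using a0 aN by (rule riesz_gamma_pos)
  define A where "A = K0 * Kg / \<gamma>"
  define Bc where "Bc = K0 / \<gamma>"
  have A0: "A > 0" and Bc0: "Bc > 0" using K0 Kg \<gamma> by (auto simp: A_def Bc_def)
  define \<omega> where "\<omega> = omega_const \<beta>"
  have \<omega>0: "\<omega> > 0" using omega_const_pos[OF b0] by (simp add: \<omega>_def)
  define W where "W = \<omega> * (5 * D) powr \<beta>"
  have W0: "W > 0" using \<omega>0 D0 by (simp add: W_def)
  define Z where "Z = \<omega> * R powr \<beta>"
  have Z0: "Z > 0" using \<omega>0 R by (simp add: Z_def)
  define c where "c = \<beta> * ln 2 / (2 * Bc) powr q"
  have c0: "c > 0" using b0 Bc0 by (simp add: c_def)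
  define T0 where "T0 = 2 * (A + Bc)"
  define C where "C = W * 2 powr \<beta> + Z * exp (c * T0 powr q)"
  have C0: "C > 0" using W0 Z0 by (simp add: C_def add_pos_pos)
  show ?thesis
  proof (rule exI[of _ c], rule exI[of _ C], intro conjI c0 C0 allI impI)
    fix f :: "'a \<Rightarrow> real" and t :: real
    assume H: "f \<in> borel_measurable (lebesgue_on \<Omega>) \<and>
        (\<integral>\<^sup>+ x \<in> \<Omega>. ennreal (\<bar>f x\<bar> powr (real DIM('a) / \<alpha>)) \<partial>lebesgue) \<le> 1 \<and> t > 0"
    then have fm: "f \<in> borel_measurable (lebesgue_on \<Omega>)"
      and fint: "(\<integral>\<^sup>+y. ennreal (\<bar>f y\<bar> powr (real DIM('a) / \<alpha>)) * indicator \<Omega> y \<partial>lebesgue) \<le> 1"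
      and t0: "t > 0" by auto
    define E where "E = riesz_superlevel \<alpha> \<Omega> f t"
    have EO: "E \<subseteq> \<Omega>" by (auto simp: E_def riesz_superlevel_def)
    have qq: "real DIM('a) / (real DIM('a) - \<alpha>) = q" by (simp add: q_def N_def)
    have triv: "hausdorff_content \<beta> E \<le> ennreal Z"
    proof (rule hc_le[OF b0, of "UNIV :: unit set" "\<lambda>_. R" _ "\<lambda>_. 0"])
      show "E \<subseteq> (\<Union>i\<in>UNIV. ball 0 R)" using EO R by auto
      fix I :: "unit set" assume "finite I" "I \<subseteq> UNIV"
      have "card I \<le> 1" using card_mono[of "UNIV::unit set" I] by simp
      then have "real (card I) * Z \<le> 1 * Z" using Z0 by (intro mult_right_mono) auto
      then show "(\<Sum>i\<in>I. omega_const \<beta> * R powr \<beta>) \<le> Z" by (simp add: Z_def \<omega>_def)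
    qed (use R in auto)
    have main: "hausdorff_content \<beta> E \<le> ennreal (C * exp (- c * t powr q))"
    proof (cases "t \<le> T0")
      case True
      have "Z = Z * exp (c * t powr q) * exp (- c * t powr q)" by (simp add: exp_minus field_simps)
      also have "\<dots> \<le> Z * exp (c * T0 powr q) * exp (- c * t powr q)"
        using True t0 c0 Z0 q1 by (intro mult_right_mono mult_left_mono) (auto intro!: powr_mono2)
      also have "\<dots> \<le> C * exp (- c * t powr q)"
        using W0 by (intro mult_right_mono) (auto simp: C_def)
      finally show ?thesis using triv by (meson ennreal_leI order_trans)
    next
      case False
      define s where "s = (t - A) / Bc"
      have s2: "s \<ge> 2" using False Bc0 A0 by (simp add: s_def T0_def field_simps)
      have sq: "s powr q \<ge> s"
      proof -
        have "s powr 1 \<le> s powr q" using q1 s2 by (intro powr_mono) auto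
        then show ?thesis using s2 by simp
      qed
      define M where "M = nat \<lfloor>s powr q\<rfloor>"
      have M1: "M \<ge> 1" using sq s2 by (simp add: M_def le_nat_iff)
      have Mle: "real M \<le> s powr q" using sq s2 by (simp add: M_def)
      have Mgt: "real M > s powr q - 1" using sq s2 by (simp add: M_def)
      have Me: "real M powr e1 \<le> s"
      proof -
        have "real M powr e1 \<le> (s powr q) powr e1" using Mle M1 a0 aN by (intro powr_mono2) (auto simp: e1_def N_def)
        also have "\<dots> = s" using s2 qe by (simp add: powr_powr)
        finally show ?thesis .
      qed
      have bound: "A + Bc * real M powr e1 \<le> t" using Me Bc0 by (simp add: s_def field_simps)
      define Bad where "Bad = {x \<in> \<Omega>. \<exists>k::nat. ennreal (2 powr (- real k * \<beta>)) <
            (\<integral>\<^sup>+y. ennreal (\<bar>f y\<bar> powr (real DIM('a) / \<alpha>)) * indicator \<Omega> y * indicator (ball x (D / 2 ^ (M + k))) y \<partial>lebesgue)}"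
      have EB: "E \<subseteq> Bad"
      proof
        fix x assume xE: "x \<in> E"
        then have x\<Omega>: "x \<in> \<Omega>" using EO by auto
        show "x \<in> Bad"
        proof (rule ccontr)
          assume "x \<notin> Bad"
          then have good: "\<forall>k. (\<integral>\<^sup>+y. ennreal (\<bar>f y\<bar> powr (real DIM('a) / \<alpha>)) * indicator \<Omega> y
                      * indicator (ball x (D / 2 ^ (M + k))) y \<partial>lebesgue) \<le> ennreal (2 powr (- real k * \<beta>))"
            using x\<Omega> by (auto simp: Bad_def not_less)
          note gb = good_bound[OF \<Omega>s a0 aN b0 fm fint D0 xD[OF x\<Omega>] M1 good]
          have gb': "(\<integral>\<^sup>+y. ennreal (norm (indicator \<Omega> y *\<^sub>R riesz_kernel \<alpha> f x y)) \<partial>lebesgue)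
              \<le> ennreal (K0 * (real M powr e1 + Kg))"
            using gb by (simp add: K0_def V_def e1_def N_def Kg_def \<rho>_def)
          have B0: "K0 * (real M powr e1 + Kg) \<ge> 0" using K0 Kg by simp
          note gc = good_consequence[OF \<Omega>s a0 aN fm B0 gb']
          have "K0 * (real M powr e1 + Kg) / riesz_gamma DIM('a) \<alpha> = A + Bc * real M powr e1"
            using \<gamma> by (simp add: A_def Bc_def \<gamma>_def field_simps)
          then have "\<bar>riesz_potential \<alpha> \<Omega> f x\<bar> \<le> t" using gc bound by linarith
          then show False using gc xE by (auto simp: E_def riesz_superlevel_def)
        qed
      qed
      have "hausdorff_content \<beta> E \<le> hausdorff_content \<beta> Bad" using EB by (rule hc_mono)
      also have "\<dots> \<le> ennreal (omega_const \<beta> * (5 * D) powr \<beta> * 2 powr (- real M * \<beta>))"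
        unfolding Bad_def using a0 by (intro bad_content[OF \<Omega>s b0 _ fm fint D0]) auto
      also have "omega_const \<beta> * (5 * D) powr \<beta> * 2 powr (- real M * \<beta>) \<le> C * exp (- c * t powr q)"
      proof -
        have "2 powr (- real M * \<beta>) \<le> 2 powr (- (s powr q - 1) * \<beta>)"
        proof -
          have m: "(s powr q - 1) * \<beta> \<le> real M * \<beta>" using Mgt b0 by (intro mult_right_mono) auto
          have m2: "- real M * \<beta> \<le> - (s powr q - 1) * \<beta>" using m by linarith
          show ?thesis using m2 by (intro powr_mono) auto
        qed
        also have "\<dots> = 2 powr \<beta> * exp (- (\<beta> * ln 2 * s powr q))"
          by (simp add: powr_def exp_add[symmetric] algebra_simps)
        also have "exp (- (\<beta> * ln 2 * s powr q)) \<le> exp (- c * t powr q)"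
        proof -
          have ts: "t / (2 * Bc) \<le> s" using False A0 Bc0 by (simp add: s_def T0_def field_simps)
          have "c * t powr q = \<beta> * ln 2 * (t / (2 * Bc)) powr q"
            using t0 Bc0 by (simp add: c_def powr_divide)
          also have "\<dots> \<le> \<beta> * ln 2 * s powr q"
            using ts t0 Bc0 q1 b0 by (intro mult_left_mono powr_mono2) auto
          finally show ?thesis by simp
        qed
        finally have "2 powr (- real M * \<beta>) \<le> 2 powr \<beta> * exp (- c * t powr q)" by simp
        then have "W * 2 powr (- real M * \<beta>) \<le> W * 2 powr \<beta> * exp (- c * t powr q)"
          using W0 by (simp add: mult.assoc)
        also have "\<dots> \<le> C * exp (- c * t powr q)"
          using Z0 by (intro mult_right_mono) (auto simp: C_def)
        finally show ?thesis by (simp add: W_def \<omega>_def)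
      qed
      finally show ?thesis by (simp add: ennreal_leI)
    qed
    then show "hausdorff_content \<beta> (riesz_superlevel \<alpha> \<Omega> f t) \<le> ennreal (C * exp (- c * t powr (real DIM('a) / (real DIM('a) - \<alpha>))))"
      by (simp add: qq E_def)
  qed
qed

end
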